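(* Let $G$ be a finite group acting cellularly on $K$, and hence on $\operatorname{Sec}(\pi^{\mathrm{sk}})$. Then the groupoid of $G$-equivariant Stokes cocycles on $K$ is canonically equivalent to the homotopy fixed point groupoid $\operatorname{Sec}(\pi^{\mathrm{sk}})^{hG}$.
   Context: Setting: $N^\circ$ is a regular punctured collar (walls removed) of the boundary over a reduced SNC divisor $D$ in a level-$n$ Kummer Kato–Nakayama space, with Stokes input (finite index set $\Phi$, graded local system $\mathrm{Gr}=\bigoplus_{q\in\Phi}\mathrm{Gr}_q$, locally constant preorders) and Stokes sheaf $\mathrm{St}_\Phi$ (automorphisms of $\mathrm{Gr}$ preserving the standard filtrations $\bigoplus_{q'\preceq q}\mathrm{Gr}_{q'}$ and inducing the identity on graded pieces). $\Sigma_{D,\Phi,n}$ is the common refinement of the SNC-depth and Stokes-wall stratifications of $N^\circ$; on each stratum $S$, $\mathrm{St}_\Phi$ is locally constant, and $\mathrm{St}_\Phi(S)$ denotes its group of sections over a contractible open of $S$. $K$ is a locally finite CW decomposition of $N^\circ$ adapted to $\Sigma_{D,\Phi,n}$ (every open cell lies in a unique stratum; $S(c)$ is the stratum of a cell $c$). $\Pi_1^{\mathrm{sk}}(K)$ is the groupoid on the vertices generated by oriented $1$-cells (with inverses) subject to the relations from $2$-cells. $\mathcal G_C^{\mathrm{sk}}$ has the same objects and is generated by $(e,u)$, $e$ an oriented edge, $u\in\mathrm{St}_\Phi(S(e))$, with labels multiplying along compositions and $2$-cell relations; $\pi^{\mathrm{sk}}:\mathcal G_C^{\mathrm{sk}}\to\Pi_1^{\mathrm{sk}}(K)$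 forgets labels. A strict section of $\pi^{\mathrm{sk}}$ is equivalently a choice of labels $u_e\in\mathrm{St}_\Phi(S(e))$ on oriented $1$-cells satisfying the $2$-cell relations, and natural isomorphisms are vertex gauges; $\operatorname{Sec}(\pi^{\mathrm{sk}})$ is the groupoid of these. $G$ acts on $K$ by cellular maps and on the Stokes data by pullback, writing $g(u)$ for the transported element. A $G$-equivariant Stokes cocycle on $K$ is a cocycle $(u_e)$ for $\pi^{\mathrm{sk}}$ together with elements $a_g(v)\in\mathrm{St}_\Phi(S(v))$ for every $g\in G$ and vertex $v$ such that $u_{g\cdot e}=a_g(w)\,g(u_e)\,a_g(v)^{-1}$ for every oriented $1$-cell $e:v\to w$ and $g\in G$, and $a_{gh}(v)=a_g(v)\,g(a_h(v))$ for all $g,h$ and vertices $v$; morphisms are vertex gauges $h(v)\in\mathrm{St}_\Phi(S(v))$ transforming $(u_e,a_g(v))$ into $(u'_e,a'_g(v))$ by the usual conjugation. For a finite group $G$ acting on a groupoid $\mathcal C$ by strict autoequivalences, $\mathcal C^{hG}$ is the groupoid of objects $x$ with isomorphisms $\varphi_g:g\cdot x\to x$ such that $\varphi_1=\mathrm{id}$, $\varphi_{gh}=\varphi_g\circ g(\varphi_h)$, with morphisms $f$ satisfying $f\varphi_g=\varphi'_g g(f)$. *)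

theory Defs
  imports "HOL-Algebra.Group" "HOL-Algebra.Coset"
begin

text \<open>The 2-cells are recorded through their boundary loops (lists of oriented edges).
  All Stokes groups St(S(c)) are modelled as subgroups of one ambient group amb,
  in which the products appearing in the cocycle formulas are taken.\<close>

record ('v, 'e, 'a) stokes_skel =
  amb    :: "'a monoid"
  src    :: "'e \<Rightarrow> 'v"
  tgt    :: "'e \<Rightarrow> 'v"
  opp    :: "'e \<Rightarrow> 'e"
  cells2 :: "'e list set"
  StV    :: "'v \<Rightarrow> 'a set"
  StE    :: "'e \<Rightarrow> 'a set"

definition closed_path :: "('v, 'e, 'a) stokes_skel \<Rightarrow> 'e list \<Rightarrow> bool" where
  "closed_path K l \<longleftrightarrow> l \<noteq> [] \<and>
     (\<forall>i. Suc i < length l \<longrightarrow> tgt K (l ! i) = src K (l ! Suc i)) \<and>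
     tgt K (last l) = src K (hd l)"

definition skel_wf :: "('v, 'e, 'a) stokes_skel \<Rightarrow> bool" where
  "skel_wf K \<longleftrightarrow> group (amb K) \<and>
     (\<forall>v. subgroup (StV K v) (amb K)) \<and>
     (\<forall>e. subgroup (StE K e) (amb K)) \<and>
     (\<forall>e. src K (opp K e) = tgt K e \<and> tgt K (opp K e) = src K e \<and>
          opp K (opp K e) = e \<and> opp K e \<noteq> e \<and> StE K (opp K e) = StE K e) \<and>
     (\<forall>l \<in> cells2 K. closed_path K l)"

text \<open>Label of a path e1,...,en (composition e1 first): u(en) * ... * u(e1).\<close>
fun path_label :: "('v, 'e, 'a) stokes_skel \<Rightarrow> ('e \<Rightarrow> 'a) \<Rightarrow> 'e list \<Rightarrow> 'a" where
  "path_label K u [] = \<one>\<^bsub>amb K\<^esub>"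
| "path_label K u (e # es) = path_label K u es \<otimes>\<^bsub>amb K\<^esub> u e"

text \<open>Objects of Sec(pi^sk): strict sections = labels on oriented 1-cells
  satisfying the 2-cell relations.\<close>
definition sk_cocycle :: "('v, 'e, 'a) stokes_skel \<Rightarrow> ('e \<Rightarrow> 'a) \<Rightarrow> bool" where
  "sk_cocycle K u \<longleftrightarrow> (\<forall>e. u e \<in> StE K e) \<and>
     (\<forall>e. u (opp K e) = inv\<^bsub>amb K\<^esub> (u e)) \<and>
     (\<forall>l \<in> cells2 K. path_label K u l = \<one>\<^bsub>amb K\<^esub>)"

definition gauge :: "('v, 'e, 'a) stokes_skel \<Rightarrow> ('v \<Rightarrow> 'a) \<Rightarrow> bool" where
  "gauge K h \<longleftrightarrow> (\<forall>v. h v \<in> StV K v)"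

definition gauge_transforms :: "('v, 'e, 'a) stokes_skel \<Rightarrow> ('v \<Rightarrow> 'a) \<Rightarrow> ('e \<Rightarrow> 'a) \<Rightarrow> ('e \<Rightarrow> 'a) \<Rightarrow> bool" where
  "gauge_transforms K h u u' \<longleftrightarrow>
     (\<forall>e. u' e = h (tgt K e) \<otimes>\<^bsub>amb K\<^esub> u e \<otimes>\<^bsub>amb K\<^esub> inv\<^bsub>amb K\<^esub> (h (src K e)))"

text \<open>Morphisms of Sec(pi^sk): vertex gauges.\<close>
definition sec_hom :: "('v, 'e, 'a) stokes_skel \<Rightarrow> ('e \<Rightarrow> 'a) \<Rightarrow> ('e \<Rightarrow> 'a) \<Rightarrow> ('v \<Rightarrow> 'a) set" where
  "sec_hom K u u' = {h. gauge K h \<and> gauge_transforms K h u u'}"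

text \<open>Composition: first h, then h'.\<close>
definition gauge_comp :: "('v, 'e, 'a) stokes_skel \<Rightarrow> ('v \<Rightarrow> 'a) \<Rightarrow> ('v \<Rightarrow> 'a) \<Rightarrow> ('v \<Rightarrow> 'a)" where
  "gauge_comp K h' h = (\<lambda>v. h' v \<otimes>\<^bsub>amb K\<^esub> h v)"

definition gauge_id :: "('v, 'e, 'a) stokes_skel \<Rightarrow> ('v \<Rightarrow> 'a)" where
  "gauge_id K = (\<lambda>v. \<one>\<^bsub>amb K\<^esub>)"

record ('g, 'v, 'e, 'a) skel_action =
  actV :: "'g \<Rightarrow> 'v \<Rightarrow> 'v"
  actE :: "'g \<Rightarrow> 'e \<Rightarrow> 'e"
  actA :: "'g \<Rightarrow> 'a \<Rightarrow> 'a"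

text \<open>Two boundary loops describe the same 2-cell relation if they agree up to
  rotation (choice of base point) and reversal of orientation.\<close>
definition same_loop :: "('v, 'e, 'a) stokes_skel \<Rightarrow> 'e list \<Rightarrow> 'e list \<Rightarrow> bool" where
  "same_loop K l l' \<longleftrightarrow> (\<exists>n. l = rotate n l' \<or> l = rotate n (map (opp K) (rev l')))"

definition action_wf :: "('g, 'c) monoid_scheme \<Rightarrow> ('v, 'e, 'a) stokes_skel \<Rightarrow> ('g, 'v, 'e, 'a) skel_action \<Rightarrow> bool" where
  "action_wf G K \<alpha> \<longleftrightarrow> group G \<and> finite (carrier G) \<and>
     actV \<alpha> \<one>\<^bsub>G\<^esub> = id \<and> actE \<alpha> \<one>\<^bsub>G\<^esub> = id \<and>
     (\<forall>x \<in> carrier (amb K). actA \<alpha> \<one>\<^bsub>G\<^esub> x = x) \<and>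
     (\<forall>g \<in> carrier G. \<forall>h \<in> carrier G.
        actV \<alpha> (g \<otimes>\<^bsub>G\<^esub> h) = actV \<alpha> g \<circ> actV \<alpha> h \<and>
        actE \<alpha> (g \<otimes>\<^bsub>G\<^esub> h) = actE \<alpha> g \<circ> actE \<alpha> h \<and>
        (\<forall>x \<in> carrier (amb K). actA \<alpha> (g \<otimes>\<^bsub>G\<^esub> h) x = actA \<alpha> g (actA \<alpha> h x))) \<and>
     (\<forall>g \<in> carrier G.
        actA \<alpha> g \<in> hom (amb K) (amb K) \<and>
        (\<forall>v. actA \<alpha> g ` StV K v \<subseteq> StV K (actV \<alpha> g v)) \<and>
        (\<forall>e. actA \<alpha> g ` StE K e \<subseteq> StE K (actE \<alpha> g e)) \<and>
        (\<forall>e. src K (actE \<alpha> g e) = actV \<alpha> g (src K e) \<and>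
             tgt K (actE \<alpha> g e) = actV \<alpha> g (tgt K e) \<and>
             opp K (actE \<alpha> g e) = actE \<alpha> g (opp K e)) \<and>
        (\<forall>l \<in> cells2 K. \<exists>l' \<in> cells2 K. same_loop K (map (actE \<alpha> g) l) l'))"

definition act_sec :: "('g, 'c) monoid_scheme \<Rightarrow> ('g, 'v, 'e, 'a) skel_action \<Rightarrow> 'g \<Rightarrow> ('e \<Rightarrow> 'a) \<Rightarrow> ('e \<Rightarrow> 'a)" where
  "act_sec G \<alpha> g u = (\<lambda>e. actA \<alpha> g (u (actE \<alpha> (inv\<^bsub>G\<^esub> g) e)))"

definition act_gauge :: "('g, 'c) monoid_scheme \<Rightarrow> ('g, 'v, 'e, 'a) skel_action \<Rightarrow> 'g \<Rightarrow> ('v \<Rightarrow> 'a) \<Rightarrow> ('v \<Rightarrow> 'a)" where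
  "act_gauge G \<alpha> g h = (\<lambda>v. actA \<alpha> g (h (actV \<alpha> (inv\<^bsub>G\<^esub> g) v)))"

definition eq_cocycle :: "('g, 'c) monoid_scheme \<Rightarrow> ('v, 'e, 'a) stokes_skel \<Rightarrow> ('g, 'v, 'e, 'a) skel_action
    \<Rightarrow> ('e \<Rightarrow> 'a) \<times> ('g \<Rightarrow> 'v \<Rightarrow> 'a) \<Rightarrow> bool" where
  "eq_cocycle G K \<alpha> ua \<longleftrightarrow> (case ua of (u, a) \<Rightarrow>
     sk_cocycle K u \<and>
     (\<forall>g \<in> carrier G. \<forall>v. a g v \<in> StV K (actV \<alpha> g v)) \<and>
     (\<forall>g \<in> carrier G. \<forall>e. u (actE \<alpha> g e) =
         a g (tgt K e) \<otimes>\<^bsub>amb K\<^esub> actA \<alpha> g (u e) \<otimes>\<^bsub>amb K\<^esub> inv\<^bsub>amb K\<^esub> (a g (src K e))) \<and>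
     (\<forall>g \<in> carrier G. \<forall>h \<in> carrier G. \<forall>v.
         a (g \<otimes>\<^bsub>G\<^esub> h) v = a g (actV \<alpha> h v) \<otimes>\<^bsub>amb K\<^esub> actA \<alpha> g (a h v)) \<and>
     (\<forall>g. g \<notin> carrier G \<longrightarrow> a g = (\<lambda>v. \<one>\<^bsub>amb K\<^esub>)))"

definition eq_cocycle_hom :: "('g, 'c) monoid_scheme \<Rightarrow> ('v, 'e, 'a) stokes_skel \<Rightarrow> ('g, 'v, 'e, 'a) skel_action
    \<Rightarrow> ('e \<Rightarrow> 'a) \<times> ('g \<Rightarrow> 'v \<Rightarrow> 'a) \<Rightarrow> ('e \<Rightarrow> 'a) \<times> ('g \<Rightarrow> 'v \<Rightarrow> 'a) \<Rightarrow> ('v \<Rightarrow> 'a) set" where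
  "eq_cocycle_hom G K \<alpha> ua ua' = {h. gauge K h \<and> gauge_transforms K h (fst ua) (fst ua') \<and>
     (\<forall>g \<in> carrier G. \<forall>v. snd ua' g v =
        h (actV \<alpha> g v) \<otimes>\<^bsub>amb K\<^esub> snd ua g v \<otimes>\<^bsub>amb K\<^esub> inv\<^bsub>amb K\<^esub> (actA \<alpha> g (h v)))}"

definition hfix_obj :: "('g, 'c) monoid_scheme \<Rightarrow> ('v, 'e, 'a) stokes_skel \<Rightarrow> ('g, 'v, 'e, 'a) skel_action
    \<Rightarrow> ('e \<Rightarrow> 'a) \<times> ('g \<Rightarrow> 'v \<Rightarrow> 'a) \<Rightarrow> bool" where
  "hfix_obj G K \<alpha> x\<phi> \<longleftrightarrow> (case x\<phi> of (x, \<phi>) \<Rightarrow>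
     sk_cocycle K x \<and>
     (\<forall>g \<in> carrier G. \<phi> g \<in> sec_hom K (act_sec G \<alpha> g x) x) \<and>
     \<phi> \<one>\<^bsub>G\<^esub> = gauge_id K \<and>
     (\<forall>g \<in> carrier G. \<forall>h \<in> carrier G.
        \<phi> (g \<otimes>\<^bsub>G\<^esub> h) = gauge_comp K (\<phi> g) (act_gauge G \<alpha> g (\<phi> h))) \<and>
     (\<forall>g. g \<notin> carrier G \<longrightarrow> \<phi> g = gauge_id K))"

definition hfix_hom :: "('g, 'c) monoid_scheme \<Rightarrow> ('v, 'e, 'a) stokes_skel \<Rightarrow> ('g, 'v, 'e, 'a) skel_action
    \<Rightarrow> ('e \<Rightarrow> 'a) \<times> ('g \<Rightarrow> 'v \<Rightarrow> 'a) \<Rightarrow> ('e \<Rightarrow> 'a) \<times> ('g \<Rightarrow> 'v \<Rightarrow> 'a) \<Rightarrow> ('v \<Rightarrow> 'a) set" where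
  "hfix_hom G K \<alpha> x\<phi> x\<phi>' = {f. f \<in> sec_hom K (fst x\<phi>) (fst x\<phi>') \<and>
     (\<forall>g \<in> carrier G. gauge_comp K f (snd x\<phi> g) =
                        gauge_comp K (snd x\<phi>' g) (act_gauge G \<alpha> g f))}"

text \<open>A functor F between categories given by object sets, hom sets, composition
  (comp g f = "g after f") and identities, which is fully faithful and essentially surjective.\<close>
definition cat_equivalent ::
  "'o1 set \<Rightarrow> ('o1 \<Rightarrow> 'o1 \<Rightarrow> 'm1 set) \<Rightarrow> ('m1 \<Rightarrow> 'm1 \<Rightarrow> 'm1) \<Rightarrow> ('o1 \<Rightarrow> 'm1)
   \<Rightarrow> 'o2 set \<Rightarrow> ('o2 \<Rightarrow> 'o2 \<Rightarrow> 'm2 set) \<Rightarrow> ('m2 \<Rightarrow> 'm2 \<Rightarrow> 'm2) \<Rightarrow> ('o2 \<Rightarrow> 'm2) \<Rightarrow> bool" where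
  "cat_equivalent O1 H1 C1 I1 O2 H2 C2 I2 \<longleftrightarrow>
    (\<exists>Fo Fm.
       (\<forall>x \<in> O1. Fo x \<in> O2) \<and>
       (\<forall>x \<in> O1. \<forall>y \<in> O1. bij_betw (Fm x y) (H1 x y) (H2 (Fo x) (Fo y))) \<and>
       (\<forall>x \<in> O1. Fm x x (I1 x) = I2 (Fo x)) \<and>
       (\<forall>x \<in> O1. \<forall>y \<in> O1. \<forall>z \<in> O1. \<forall>f \<in> H1 x y. \<forall>g \<in> H1 y z.
           Fm x z (C1 g f) = C2 (Fm y z g) (Fm x y f)) \<and>
       (\<forall>z \<in> O2. \<exists>x \<in> O1. \<exists>f \<in> H2 (Fo x) z. \<exists>f' \<in> H2 z (Fo x).
           C2 f' f = I2 (Fo x) \<and> C2 f f' = I2 z))"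

end

theory Submission
  imports Defs
begin

definition FoC :: "('g, 'c) monoid_scheme \<Rightarrow> ('g, 'v, 'e, 'a) skel_action
    \<Rightarrow> ('e \<Rightarrow> 'a) \<times> ('g \<Rightarrow> 'v \<Rightarrow> 'a) \<Rightarrow> ('e \<Rightarrow> 'a) \<times> ('g \<Rightarrow> 'v \<Rightarrow> 'a)" where
  "FoC G \<alpha> ua = (fst ua, \<lambda>g v. snd ua g (actV \<alpha> (inv\<^bsub>G\<^esub> g) v))"

definition GoC :: "('g, 'c) monoid_scheme \<Rightarrow> ('g, 'v, 'e, 'a) skel_action \<Rightarrow> 'a
    \<Rightarrow> ('e \<Rightarrow> 'a) \<times> ('g \<Rightarrow> 'v \<Rightarrow> 'a) \<Rightarrow> ('e \<Rightarrow> 'a) \<times> ('g \<Rightarrow> 'v \<Rightarrow> 'a)" where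
  "GoC G \<alpha> o1 x\<phi> = (fst x\<phi>, \<lambda>g v. if g \<in> carrier G then snd x\<phi> g (actV \<alpha> g v) else o1)"

context
  fixes G :: "('g, 'c) monoid_scheme" and K :: "('v, 'e, 'a) stokes_skel"
    and \<alpha> :: "('g, 'v, 'e, 'a) skel_action"
  assumes wfK: "skel_wf K" and wfA: "action_wf G K \<alpha>"
begin

lemma grpA: "group (amb K)" using wfK by (simp add: skel_wf_def)
lemma grpG: "group G" using wfA by (simp add: action_wf_def)

lemma StV_car: "x \<in> StV K v \<Longrightarrow> x \<in> carrier (amb K)"
  using wfK unfolding skel_wf_def by (meson subgroup.mem_carrier)
lemma StE_car: "x \<in> StE K v \<Longrightarrow> x \<in> carrier (amb K)"
  using wfK unfolding skel_wf_def by (meson subgroup.mem_carrier)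
lemma StV_one: "\<one>\<^bsub>amb K\<^esub> \<in> StV K v"
  using wfK unfolding skel_wf_def by (meson subgroup.one_closed)

lemma actA_hom: "g \<in> carrier G \<Longrightarrow> actA \<alpha> g \<in> hom (amb K) (amb K)"
  using wfA by (simp add: action_wf_def)
lemma actA_car: "g \<in> carrier G \<Longrightarrow> x \<in> carrier (amb K) \<Longrightarrow> actA \<alpha> g x \<in> carrier (amb K)"
  by (rule hom_in_carrier[OF actA_hom])
lemma actA_one: "g \<in> carrier G \<Longrightarrow> actA \<alpha> g \<one>\<^bsub>amb K\<^esub> = \<one>\<^bsub>amb K\<^esub>"
  by (rule hom_one[OF actA_hom grpA grpA])
lemma actA_mult: "g \<in> carrier G \<Longrightarrow> x \<in> carrier (amb K) \<Longrightarrow> y \<in> carrier (amb K) \<Longrightarrow>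
   actA \<alpha> g (x \<otimes>\<^bsub>amb K\<^esub> y) = actA \<alpha> g x \<otimes>\<^bsub>amb K\<^esub> actA \<alpha> g y"
  by (rule hom_mult[OF actA_hom])
lemma actA_1: "x \<in> carrier (amb K) \<Longrightarrow> actA \<alpha> \<one>\<^bsub>G\<^esub> x = x"
  using wfA by (simp add: action_wf_def)

lemma actV_comp: "g \<in> carrier G \<Longrightarrow> h \<in> carrier G \<Longrightarrow> actV \<alpha> (g \<otimes>\<^bsub>G\<^esub> h) v = actV \<alpha> g (actV \<alpha> h v)"
  using wfA by (simp add: action_wf_def)
lemma actE_comp: "g \<in> carrier G \<Longrightarrow> h \<in> carrier G \<Longrightarrow> actE \<alpha> (g \<otimes>\<^bsub>G\<^esub> h) v = actE \<alpha> g (actE \<alpha> h v)"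
  using wfA by (simp add: action_wf_def)
lemma actV_1: "actV \<alpha> \<one>\<^bsub>G\<^esub> v = v"
  using wfA by (simp add: action_wf_def)
lemma actE_1: "actE \<alpha> \<one>\<^bsub>G\<^esub> v = v"
  using wfA by (simp add: action_wf_def)

lemma actV_inv: "g \<in> carrier G \<Longrightarrow> actV \<alpha> g (actV \<alpha> (inv\<^bsub>G\<^esub> g) v) = v"
proof -
  assume g: "g \<in> carrier G"
  have i: "inv\<^bsub>G\<^esub> g \<in> carrier G" "g \<otimes>\<^bsub>G\<^esub> inv\<^bsub>G\<^esub> g = \<one>\<^bsub>G\<^esub>"
    using g grpG by (simp_all add: group.inv_closed group.r_inv)
  show ?thesis using actV_comp[OF g i(1), of v] i(2) actV_1 by simp
qed
lemma actV_inv2: "g \<in> carrier G \<Longrightarrow> actV \<alpha> (inv\<^bsub>G\<^esub> g) (actV \<alpha> g v) = v"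
proof -
  assume g: "g \<in> carrier G"
  have i: "inv\<^bsub>G\<^esub> g \<in> carrier G" "inv\<^bsub>G\<^esub> g \<otimes>\<^bsub>G\<^esub> g = \<one>\<^bsub>G\<^esub>"
    using g grpG by (simp_all add: group.inv_closed group.l_inv)
  show ?thesis using actV_comp[OF i(1) g, of v] i(2) actV_1 by simp
qed
lemma actE_inv: "g \<in> carrier G \<Longrightarrow> actE \<alpha> g (actE \<alpha> (inv\<^bsub>G\<^esub> g) v) = v"
proof -
  assume g: "g \<in> carrier G"
  have i: "inv\<^bsub>G\<^esub> g \<in> carrier G" "g \<otimes>\<^bsub>G\<^esub> inv\<^bsub>G\<^esub> g = \<one>\<^bsub>G\<^esub>"
    using g grpG by (simp_all add: group.inv_closed group.r_inv)
  show ?thesis using actE_comp[OF g i(1), of v] i(2) actE_1 by simp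
qed
lemma actE_inv2: "g \<in> carrier G \<Longrightarrow> actE \<alpha> (inv\<^bsub>G\<^esub> g) (actE \<alpha> g v) = v"
proof -
  assume g: "g \<in> carrier G"
  have i: "inv\<^bsub>G\<^esub> g \<in> carrier G" "inv\<^bsub>G\<^esub> g \<otimes>\<^bsub>G\<^esub> g = \<one>\<^bsub>G\<^esub>"
    using g grpG by (simp_all add: group.inv_closed group.l_inv)
  show ?thesis using actE_comp[OF i(1) g, of v] i(2) actE_1 by simp
qed

lemma src_act: "g \<in> carrier G \<Longrightarrow> src K (actE \<alpha> g e) = actV \<alpha> g (src K e)"
  using wfA by (simp add: action_wf_def)
lemma tgt_act: "g \<in> carrier G \<Longrightarrow> tgt K (actE \<alpha> g e) = actV \<alpha> g (tgt K e)"
  using wfA by (simp add: action_wf_def)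

lemma eqc_a1:
  assumes "eq_cocycle G K \<alpha> (u, a)"
  shows "a \<one>\<^bsub>G\<^esub> w = \<one>\<^bsub>amb K\<^esub>"
proof -
  interpret A: group "amb K" by (rule grpA)
  have o: "\<one>\<^bsub>G\<^esub> \<in> carrier G" using grpG group.is_monoid monoid.one_closed by blast
  have st: "\<forall>g \<in> carrier G. \<forall>v. a g v \<in> StV K (actV \<alpha> g v)"
   and co: "\<forall>g \<in> carrier G. \<forall>h \<in> carrier G. \<forall>v.
         a (g \<otimes>\<^bsub>G\<^esub> h) v = a g (actV \<alpha> h v) \<otimes>\<^bsub>amb K\<^esub> actA \<alpha> g (a h v)"
    using assms unfolding eq_cocycle_def by auto
  have c: "a \<one>\<^bsub>G\<^esub> w \<in> carrier (amb K)" using st o StV_car by blast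
  have oo: "\<one>\<^bsub>G\<^esub> \<otimes>\<^bsub>G\<^esub> \<one>\<^bsub>G\<^esub> = \<one>\<^bsub>G\<^esub>"
    using o by (rule monoid.l_one[OF group.is_monoid[OF grpG]])
  have "a (\<one>\<^bsub>G\<^esub> \<otimes>\<^bsub>G\<^esub> \<one>\<^bsub>G\<^esub>) w = a \<one>\<^bsub>G\<^esub> (actV \<alpha> \<one>\<^bsub>G\<^esub> w) \<otimes>\<^bsub>amb K\<^esub> actA \<alpha> \<one>\<^bsub>G\<^esub> (a \<one>\<^bsub>G\<^esub> w)"
    using co o by blast
  then have "a \<one>\<^bsub>G\<^esub> w \<otimes>\<^bsub>amb K\<^esub> a \<one>\<^bsub>G\<^esub> w = a \<one>\<^bsub>G\<^esub> w"
    by (simp only: oo actV_1 actA_1[OF c])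
  then show ?thesis using c A.l_cancel_one by blast
qed


lemma inv_G: "g \<in> carrier G \<Longrightarrow> inv\<^bsub>G\<^esub> g \<in> carrier G"
  using grpG by (simp add: group.inv_closed)
lemma mult_G: "g \<in> carrier G \<Longrightarrow> h \<in> carrier G \<Longrightarrow> g \<otimes>\<^bsub>G\<^esub> h \<in> carrier G"
  using grpG by (simp add: group.is_monoid monoid.m_closed)

lemma obj_fwd:
  assumes "eq_cocycle G K \<alpha> (u, a)"
  shows "hfix_obj G K \<alpha> (FoC G \<alpha> (u, a))"
proof -
  interpret A: group "amb K" by (rule grpA)
  have sk: "sk_cocycle K u"
   and st: "\<And>g v. g \<in> carrier G \<Longrightarrow> a g v \<in> StV K (actV \<alpha> g v)"
   and ed: "\<And>g e. g \<in> carrier G \<Longrightarrow> u (actE \<alpha> g e) =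
         a g (tgt K e) \<otimes>\<^bsub>amb K\<^esub> actA \<alpha> g (u e) \<otimes>\<^bsub>amb K\<^esub> inv\<^bsub>amb K\<^esub> (a g (src K e))"
   and co: "\<And>g h v. g \<in> carrier G \<Longrightarrow> h \<in> carrier G \<Longrightarrow>
         a (g \<otimes>\<^bsub>G\<^esub> h) v = a g (actV \<alpha> h v) \<otimes>\<^bsub>amb K\<^esub> actA \<alpha> g (a h v)"
   and ou: "\<And>g. g \<notin> carrier G \<Longrightarrow> a g = (\<lambda>v. \<one>\<^bsub>amb K\<^esub>)"
    using assms unfolding eq_cocycle_def by auto
  define \<phi> where "\<phi> = (\<lambda>g v. a g (actV \<alpha> (inv\<^bsub>G\<^esub> g) v))"
  have F: "FoC G \<alpha> (u, a) = (u, \<phi>)" by (simp add: FoC_def \<phi>_def)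
  have 2: "\<phi> g \<in> sec_hom K (act_sec G \<alpha> g u) u" if g: "g \<in> carrier G" for g
  proof -
    have "gauge K (\<phi> g)" unfolding gauge_def \<phi>_def
      using st[OF g] actV_inv[OF g] by metis
    moreover have "gauge_transforms K (\<phi> g) (act_sec G \<alpha> g u) u"
      unfolding gauge_transforms_def
    proof
      fix e
      define e0 where "e0 = actE \<alpha> (inv\<^bsub>G\<^esub> g) e"
      have e: "actE \<alpha> g e0 = e" using actE_inv[OF g] e0_def by simp
      have t: "tgt K e0 = actV \<alpha> (inv\<^bsub>G\<^esub> g) (tgt K e)" "src K e0 = actV \<alpha> (inv\<^bsub>G\<^esub> g) (src K e)"
        using tgt_act[OF inv_G[OF g]] src_act[OF inv_G[OF g]] e0_def by auto
      show "u e = \<phi> g (tgt K e) \<otimes>\<^bsub>amb K\<^esub> act_sec G \<alpha> g u e \<otimes>\<^bsub>amb K\<^esub> inv\<^bsub>amb K\<^esub> (\<phi> g (src K e))"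
        using ed[OF g, of e0] unfolding e t act_sec_def \<phi>_def e0_def[symmetric] .
    qed
    ultimately show ?thesis by (simp add: sec_hom_def)
  qed
  have 3: "\<phi> \<one>\<^bsub>G\<^esub> = gauge_id K"
    using eqc_a1[OF assms] by (simp add: \<phi>_def gauge_id_def)
  have 4: "\<phi> (g \<otimes>\<^bsub>G\<^esub> h) = gauge_comp K (\<phi> g) (act_gauge G \<alpha> g (\<phi> h))"
    if g: "g \<in> carrier G" and h: "h \<in> carrier G" for g h
  proof
    fix v
    define w where "w = actV \<alpha> (inv\<^bsub>G\<^esub> h) (actV \<alpha> (inv\<^bsub>G\<^esub> g) v)"
    have iv: "inv\<^bsub>G\<^esub> (g \<otimes>\<^bsub>G\<^esub> h) = inv\<^bsub>G\<^esub> h \<otimes>\<^bsub>G\<^esub> inv\<^bsub>G\<^esub> g"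
      using grpG g h by (simp add: group.inv_mult_group)
    have w: "actV \<alpha> (inv\<^bsub>G\<^esub> (g \<otimes>\<^bsub>G\<^esub> h)) v = w"
      unfolding iv w_def by (rule actV_comp[OF inv_G[OF h] inv_G[OF g]])
    have hw: "actV \<alpha> h w = actV \<alpha> (inv\<^bsub>G\<^esub> g) v" unfolding w_def by (rule actV_inv[OF h])
    show "\<phi> (g \<otimes>\<^bsub>G\<^esub> h) v = gauge_comp K (\<phi> g) (act_gauge G \<alpha> g (\<phi> h)) v"
      unfolding \<phi>_def gauge_comp_def act_gauge_def w co[OF g h] hw w_def[symmetric] ..
  qed
  have 5: "\<phi> g = gauge_id K" if "g \<notin> carrier G" for g
    using ou[OF that] by (simp add: \<phi>_def gauge_id_def)
  show ?thesis unfolding F hfix_obj_def using sk 2 3 4 5 by auto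
qed

lemma obj_bwd:
  assumes "hfix_obj G K \<alpha> (x, \<phi>)"
  shows "eq_cocycle G K \<alpha> (GoC G \<alpha> \<one>\<^bsub>amb K\<^esub> (x, \<phi>)) \<and> FoC G \<alpha> (GoC G \<alpha> \<one>\<^bsub>amb K\<^esub> (x, \<phi>)) = (x, \<phi>)"
proof -
  interpret A: group "amb K" by (rule grpA)
  have sk: "sk_cocycle K x"
   and sh: "\<And>g. g \<in> carrier G \<Longrightarrow> \<phi> g \<in> sec_hom K (act_sec G \<alpha> g x) x"
   and co: "\<And>g h. g \<in> carrier G \<Longrightarrow> h \<in> carrier G \<Longrightarrow>
        \<phi> (g \<otimes>\<^bsub>G\<^esub> h) = gauge_comp K (\<phi> g) (act_gauge G \<alpha> g (\<phi> h))"
   and ou: "\<And>g. g \<notin> carrier G \<Longrightarrow> \<phi> g = gauge_id K"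
    using assms unfolding hfix_obj_def by auto
  define a where "a = (\<lambda>g v. if g \<in> carrier G then \<phi> g (actV \<alpha> g v) else \<one>\<^bsub>amb K\<^esub>)"
  have Gd: "GoC G \<alpha> \<one>\<^bsub>amb K\<^esub> (x, \<phi>) = (x, a)" unfolding GoC_def a_def fst_conv snd_conv ..
  have st: "\<forall>g \<in> carrier G. \<forall>v. a g v \<in> StV K (actV \<alpha> g v)"
    using sh unfolding a_def sec_hom_def gauge_def by auto
  have ed: "\<forall>g \<in> carrier G. \<forall>e. x (actE \<alpha> g e) =
         a g (tgt K e) \<otimes>\<^bsub>amb K\<^esub> actA \<alpha> g (x e) \<otimes>\<^bsub>amb K\<^esub> inv\<^bsub>amb K\<^esub> (a g (src K e))"
  proof (intro ballI allI)
    fix g e assume g: "g \<in> carrier G"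
    have "gauge_transforms K (\<phi> g) (act_sec G \<alpha> g x) x" using sh[OF g] by (simp add: sec_hom_def)
    then have "x (actE \<alpha> g e) = \<phi> g (tgt K (actE \<alpha> g e)) \<otimes>\<^bsub>amb K\<^esub> act_sec G \<alpha> g x (actE \<alpha> g e)
        \<otimes>\<^bsub>amb K\<^esub> inv\<^bsub>amb K\<^esub> (\<phi> g (src K (actE \<alpha> g e)))"
      unfolding gauge_transforms_def by blast
    then show "x (actE \<alpha> g e) =
         a g (tgt K e) \<otimes>\<^bsub>amb K\<^esub> actA \<alpha> g (x e) \<otimes>\<^bsub>amb K\<^esub> inv\<^bsub>amb K\<^esub> (a g (src K e))"
      unfolding a_def act_sec_def using g by (simp add: actE_inv2 tgt_act src_act)
  qed
  have cc: "\<forall>g \<in> carrier G. \<forall>h \<in> carrier G. \<forall>v.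
         a (g \<otimes>\<^bsub>G\<^esub> h) v = a g (actV \<alpha> h v) \<otimes>\<^bsub>amb K\<^esub> actA \<alpha> g (a h v)"
  proof (intro ballI allI)
    fix g h v assume g: "g \<in> carrier G" and h: "h \<in> carrier G"
    have "\<phi> (g \<otimes>\<^bsub>G\<^esub> h) (actV \<alpha> (g \<otimes>\<^bsub>G\<^esub> h) v) =
       \<phi> g (actV \<alpha> g (actV \<alpha> h v)) \<otimes>\<^bsub>amb K\<^esub> actA \<alpha> g (\<phi> h (actV \<alpha> (inv\<^bsub>G\<^esub> g) (actV \<alpha> g (actV \<alpha> h v))))"
      unfolding co[OF g h] gauge_comp_def act_gauge_def actV_comp[OF g h] ..
    then show "a (g \<otimes>\<^bsub>G\<^esub> h) v = a g (actV \<alpha> h v) \<otimes>\<^bsub>amb K\<^esub> actA \<alpha> g (a h v)"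
      unfolding a_def using g h mult_G[OF g h] by (simp add: actV_inv2)
  qed
  have oo: "\<forall>g. g \<notin> carrier G \<longrightarrow> a g = (\<lambda>v. \<one>\<^bsub>amb K\<^esub>)" by (simp add: a_def)
  have E: "eq_cocycle G K \<alpha> (x, a)" unfolding eq_cocycle_def using sk st ed cc oo by simp
  have "(\<lambda>g v. a g (actV \<alpha> (inv\<^bsub>G\<^esub> g) v)) = \<phi>"
  proof (intro ext)
    fix g v show "a g (actV \<alpha> (inv\<^bsub>G\<^esub> g) v) = \<phi> g v"
      by (cases "g \<in> carrier G") (simp_all add: a_def actV_inv ou gauge_id_def)
  qed
  then have "FoC G \<alpha> (x, a) = (x, \<phi>)" by (simp add: FoC_def)
  with E Gd show ?thesis by simp
qed


lemma hom_eq: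
  assumes "eq_cocycle G K \<alpha> (u, a)" and "eq_cocycle G K \<alpha> (u', a')"
  shows "eq_cocycle_hom G K \<alpha> (u, a) (u', a') = hfix_hom G K \<alpha> (FoC G \<alpha> (u, a)) (FoC G \<alpha> (u', a'))"
proof -
  interpret A: group "amb K" by (rule grpA)
  have st: "\<And>g v. g \<in> carrier G \<Longrightarrow> a g v \<in> carrier (amb K)"
    using assms(1) StV_car unfolding eq_cocycle_def by blast
  have st': "\<And>g v. g \<in> carrier G \<Longrightarrow> a' g v \<in> carrier (amb K)"
    using assms(2) StV_car unfolding eq_cocycle_def by blast
  have key: "(\<forall>v. a' g v = h (actV \<alpha> g v) \<otimes>\<^bsub>amb K\<^esub> a g v \<otimes>\<^bsub>amb K\<^esub> inv\<^bsub>amb K\<^esub> (actA \<alpha> g (h v)))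
     \<longleftrightarrow> gauge_comp K h (\<lambda>v. a g (actV \<alpha> (inv\<^bsub>G\<^esub> g) v)) =
         gauge_comp K (\<lambda>v. a' g (actV \<alpha> (inv\<^bsub>G\<^esub> g) v)) (act_gauge G \<alpha> g h)"
    if g: "g \<in> carrier G" and hg: "gauge K h" for g h
  proof -
    have hc: "\<And>v. h v \<in> carrier (amb K)" using hg StV_car unfolding gauge_def by blast
    have pt: "a' g w = h (actV \<alpha> g w) \<otimes>\<^bsub>amb K\<^esub> a g w \<otimes>\<^bsub>amb K\<^esub> inv\<^bsub>amb K\<^esub> (actA \<alpha> g (h w))
       \<longleftrightarrow> h (actV \<alpha> g w) \<otimes>\<^bsub>amb K\<^esub> a g w = a' g w \<otimes>\<^bsub>amb K\<^esub> actA \<alpha> g (h w)" for w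
      using A.inv_solve_right[of "a' g w" "h (actV \<alpha> g w) \<otimes>\<^bsub>amb K\<^esub> a g w" "actA \<alpha> g (h w)"]
        st[OF g] st'[OF g] hc actA_car[OF g hc] by simp
    have "(\<forall>v. a' g v = h (actV \<alpha> g v) \<otimes>\<^bsub>amb K\<^esub> a g v \<otimes>\<^bsub>amb K\<^esub> inv\<^bsub>amb K\<^esub> (actA \<alpha> g (h v)))
       \<longleftrightarrow> (\<forall>w. h (actV \<alpha> g w) \<otimes>\<^bsub>amb K\<^esub> a g w = a' g w \<otimes>\<^bsub>amb K\<^esub> actA \<alpha> g (h w))"
      using pt by blast
    also have "\<dots> \<longleftrightarrow> (\<forall>v. h v \<otimes>\<^bsub>amb K\<^esub> a g (actV \<alpha> (inv\<^bsub>G\<^esub> g) v) =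
        a' g (actV \<alpha> (inv\<^bsub>G\<^esub> g) v) \<otimes>\<^bsub>amb K\<^esub> actA \<alpha> g (h (actV \<alpha> (inv\<^bsub>G\<^esub> g) v)))"
    proof
      assume L: "\<forall>w. h (actV \<alpha> g w) \<otimes>\<^bsub>amb K\<^esub> a g w = a' g w \<otimes>\<^bsub>amb K\<^esub> actA \<alpha> g (h w)"
      show "\<forall>v. h v \<otimes>\<^bsub>amb K\<^esub> a g (actV \<alpha> (inv\<^bsub>G\<^esub> g) v) =
        a' g (actV \<alpha> (inv\<^bsub>G\<^esub> g) v) \<otimes>\<^bsub>amb K\<^esub> actA \<alpha> g (h (actV \<alpha> (inv\<^bsub>G\<^esub> g) v))"
      proof
        fix v show "h v \<otimes>\<^bsub>amb K\<^esub> a g (actV \<alpha> (inv\<^bsub>G\<^esub> g) v) =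
          a' g (actV \<alpha> (inv\<^bsub>G\<^esub> g) v) \<otimes>\<^bsub>amb K\<^esub> actA \<alpha> g (h (actV \<alpha> (inv\<^bsub>G\<^esub> g) v))"
          using L[rule_format, of "actV \<alpha> (inv\<^bsub>G\<^esub> g) v"] actV_inv[OF g] by simp
      qed
    next
      assume R: "\<forall>v. h v \<otimes>\<^bsub>amb K\<^esub> a g (actV \<alpha> (inv\<^bsub>G\<^esub> g) v) =
        a' g (actV \<alpha> (inv\<^bsub>G\<^esub> g) v) \<otimes>\<^bsub>amb K\<^esub> actA \<alpha> g (h (actV \<alpha> (inv\<^bsub>G\<^esub> g) v))"
      show "\<forall>w. h (actV \<alpha> g w) \<otimes>\<^bsub>amb K\<^esub> a g w = a' g w \<otimes>\<^bsub>amb K\<^esub> actA \<alpha> g (h w)"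
      proof
        fix w show "h (actV \<alpha> g w) \<otimes>\<^bsub>amb K\<^esub> a g w = a' g w \<otimes>\<^bsub>amb K\<^esub> actA \<alpha> g (h w)"
          using R[rule_format, of "actV \<alpha> g w"] actV_inv2[OF g] by simp
      qed
    qed
    also have "\<dots> \<longleftrightarrow> gauge_comp K h (\<lambda>v. a g (actV \<alpha> (inv\<^bsub>G\<^esub> g) v)) =
         gauge_comp K (\<lambda>v. a' g (actV \<alpha> (inv\<^bsub>G\<^esub> g) v)) (act_gauge G \<alpha> g h)"
      unfolding gauge_comp_def act_gauge_def fun_eq_iff ..
    finally show ?thesis .
  qed
  show ?thesis
  proof (rule equalityI; rule subsetI)
    fix h assume "h \<in> eq_cocycle_hom G K \<alpha> (u, a) (u', a')"
    then show "h \<in> hfix_hom G K \<alpha> (FoC G \<alpha> (u, a)) (FoC G \<alpha> (u', a'))"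
      unfolding eq_cocycle_hom_def hfix_hom_def sec_hom_def FoC_def using key by auto
  next
    fix h assume "h \<in> hfix_hom G K \<alpha> (FoC G \<alpha> (u, a)) (FoC G \<alpha> (u', a'))"
    then show "h \<in> eq_cocycle_hom G K \<alpha> (u, a) (u', a')"
      unfolding eq_cocycle_hom_def hfix_hom_def sec_hom_def FoC_def using key by auto
  qed
qed

lemma id_hom:
  assumes "hfix_obj G K \<alpha> z"
  shows "gauge_id K \<in> hfix_hom G K \<alpha> z z"
proof -
  interpret A: group "amb K" by (rule grpA)
  obtain x \<phi> where z: "z = (x, \<phi>)" by (cases z)
  have sk: "sk_cocycle K x"
   and sh: "\<And>g. g \<in> carrier G \<Longrightarrow> \<phi> g \<in> sec_hom K (act_sec G \<alpha> g x) x"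
    using assms unfolding hfix_obj_def z by auto
  have xc: "\<And>e. x e \<in> carrier (amb K)" using sk StE_car unfolding sk_cocycle_def by blast
  have g1: "gauge_id K \<in> sec_hom K x x"
    unfolding sec_hom_def gauge_def gauge_transforms_def gauge_id_def
    using StV_one xc by simp
  have "gauge_comp K (gauge_id K) (\<phi> g) = gauge_comp K (\<phi> g) (act_gauge G \<alpha> g (gauge_id K))"
    if g: "g \<in> carrier G" for g
  proof -
    have "\<And>v. \<phi> g v \<in> carrier (amb K)" using sh[OF g] StV_car unfolding sec_hom_def gauge_def by blast
    then show ?thesis
      unfolding gauge_comp_def act_gauge_def gauge_id_def using actA_one[OF g] by simp
  qed
  then show ?thesis using g1 unfolding hfix_hom_def z by simp
qed

end

theorem proposition9p8:
  fixes G :: "('g, 'c) monoid_scheme"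
    and K :: "('v, 'e, 'a) stokes_skel"
    and \<alpha> :: "('g, 'v, 'e, 'a) skel_action"
  assumes "skel_wf K"
    and "action_wf G K \<alpha>"
  shows "cat_equivalent
           {ua. eq_cocycle G K \<alpha> ua} (eq_cocycle_hom G K \<alpha>) (gauge_comp K) (\<lambda>_. gauge_id K)
           {x\<phi>. hfix_obj G K \<alpha> x\<phi>} (hfix_hom G K \<alpha>) (gauge_comp K) (\<lambda>_. gauge_id K)"
  unfolding cat_equivalent_def
proof (intro exI[of _ "FoC G \<alpha>"] exI[of _ "\<lambda>x y f. f"] conjI ballI)
  interpret A: group "amb K" by (rule grpA[OF assms])
  fix x assume "x \<in> {ua. eq_cocycle G K \<alpha> ua}"
  then show "FoC G \<alpha> x \<in> {x\<phi>. hfix_obj G K \<alpha> x\<phi>}"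
    using obj_fwd[OF assms] by (cases x) auto
next
  fix x y assume x: "x \<in> {ua. eq_cocycle G K \<alpha> ua}" and y: "y \<in> {ua. eq_cocycle G K \<alpha> ua}"
  obtain u a where xx: "x = (u, a)" by (cases x)
  obtain u' a' where yy: "y = (u', a')" by (cases y)
  have "eq_cocycle_hom G K \<alpha> x y = hfix_hom G K \<alpha> (FoC G \<alpha> x) (FoC G \<alpha> y)"
    using hom_eq[OF assms, of u a u' a'] x y xx yy by simp
  then show "bij_betw (\<lambda>f. f) (eq_cocycle_hom G K \<alpha> x y) (hfix_hom G K \<alpha> (FoC G \<alpha> x) (FoC G \<alpha> y))"
    by (simp add: bij_betw_def inj_on_def)
next
  fix z assume "z \<in> {x\<phi>. hfix_obj G K \<alpha> x\<phi>}"
  then have z: "hfix_obj G K \<alpha> z" by simp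
  obtain x \<phi> where zz: "z = (x, \<phi>)" by (cases z)
  have ob: "eq_cocycle G K \<alpha> (GoC G \<alpha> \<one>\<^bsub>amb K\<^esub> (x, \<phi>))"
     "FoC G \<alpha> (GoC G \<alpha> \<one>\<^bsub>amb K\<^esub> (x, \<phi>)) = (x, \<phi>)"
    using obj_bwd[OF assms, of x \<phi>] z zz by auto
  have i: "gauge_id K \<in> hfix_hom G K \<alpha> z z" by (rule id_hom[OF assms z])
  have ii: "gauge_comp K (gauge_id K) (gauge_id K) = gauge_id K"
    using grpA[OF assms] by (simp add: gauge_comp_def gauge_id_def group.is_monoid monoid.l_one monoid.one_closed)
  show "\<exists>x\<in>{ua. eq_cocycle G K \<alpha> ua}. \<exists>f\<in>hfix_hom G K \<alpha> (FoC G \<alpha> x) z.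
          \<exists>f'\<in>hfix_hom G K \<alpha> z (FoC G \<alpha> x). gauge_comp K f' f = gauge_id K \<and> gauge_comp K f f' = gauge_id K"
    using ob i ii zz by (intro bexI[of _ "GoC G \<alpha> \<one>\<^bsub>amb K\<^esub> (x, \<phi>)"]) auto
qed simp_all

end
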